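(* There exist point sets $U_n\subset\mathbb{R}^2$ of size $n^2/4+\Theta(n)$ such that every rooted directed tree with $n$ vertices has a planar dominance drawing with its vertices placed at distinct points of $U_n$.
   Context: A rooted (directed) tree is a tree whose edges are directed away from the root toward the leaves. A dominance drawing places vertices at distinct points so that there is a directed path from $u$ to $v$ if and only if both coordinates of $v$ are greater than or equal to the corresponding coordinates of $u$; it is planar if, with edges drawn as straight-line segments, no two edges cross. *)

theory Defs
  imports "HOL-Analysis.Analysis"
begin

definition rooted_tree :: "'a set \<Rightarrow> ('a \<times> 'a) set \<Rightarrow> 'a \<Rightarrow> bool" where
  "rooted_tree V E r \<longleftrightarrow>
     finite V \<and> E \<subseteq> V \<times> V \<and> r \<in> V \<and>
     (\<forall>u. (u, r) \<notin> E) \<and>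
     (\<forall>v\<in>V. v \<noteq> r \<longrightarrow> (\<exists>!u. (u, v) \<in> E)) \<and>
     (\<forall>v\<in>V. (r, v) \<in> E\<^sup>*)"

definition dominance_drawing ::
  "'a set \<Rightarrow> ('a \<times> 'a) set \<Rightarrow> ('a \<Rightarrow> real \<times> real) \<Rightarrow> bool" where
  "dominance_drawing V E p \<longleftrightarrow>
     inj_on p V \<and>
     (\<forall>u\<in>V. \<forall>v\<in>V. (u, v) \<in> E\<^sup>* \<longleftrightarrow>
        (fst (p u) \<le> fst (p v) \<and> snd (p u) \<le> snd (p v)))"

definition planar_straight_line ::
  "'a set \<Rightarrow> ('a \<times> 'a) set \<Rightarrow> ('a \<Rightarrow> real \<times> real) \<Rightarrow> bool" where
  "planar_straight_line V E p \<longleftrightarrow>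
     (\<forall>(a, b)\<in>E. \<forall>w\<in>V. w \<noteq> a \<and> w \<noteq> b \<longrightarrow> p w \<notin> closed_segment (p a) (p b)) \<and>
     (\<forall>(a, b)\<in>E. \<forall>(c, d)\<in>E. (a, b) \<noteq> (c, d) \<longrightarrow>
        closed_segment (p a) (p b) \<inter> closed_segment (p c) (p d) \<subseteq> p ` ({a, b} \<inter> {c, d}))"

definition planar_dominance_drawing_on ::
  "'a set \<Rightarrow> ('a \<times> 'a) set \<Rightarrow> (real \<times> real) set \<Rightarrow> bool" where
  "planar_dominance_drawing_on V E U \<longleftrightarrow>
     (\<exists>p. p ` V \<subseteq> U \<and> dominance_drawing V E p \<and> planar_straight_line V E p)"

end

theory Submission
  imports Defs
begin


locale rtree = fixes V :: "'a set" and E r assumes rt: "rooted_tree V E r"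
begin

lemma fin: "finite V" and sub: "E \<subseteq> V \<times> V" and rV: "r \<in> V"
  and noin: "(u, r) \<notin> E" and uniq: "v \<in> V \<Longrightarrow> v \<noteq> r \<Longrightarrow> \<exists>!u. (u, v) \<in> E"
  and reach: "v \<in> V \<Longrightarrow> (r, v) \<in> E\<^sup>*"
  using rt unfolding rooted_tree_def by blast+

definition W where "W c = {v. (c, v) \<in> E\<^sup>*}"
definition ch where "ch = {c. (r, c) \<in> E}"

lemma to_r: "(v, r) \<in> E\<^sup>* \<Longrightarrow> v = r"
  by (erule rtranclE) (auto simp: noin)

lemma star_V: "(u, v) \<in> E\<^sup>* \<Longrightarrow> u \<in> V \<Longrightarrow> v \<in> V"
  by (induction rule: rtrancl_induct) (use sub in auto)

lemma parent_unique: "(a, v) \<in> E \<Longrightarrow> (b, v) \<in> E \<Longrightarrow> a = b"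
proof -
  assume a: "(a, v) \<in> E" and b: "(b, v) \<in> E"
  have "v \<in> V" using a sub by auto
  moreover have "v \<noteq> r" using a noin by auto
  ultimately show "a = b" using uniq a b by blast
qed

lemma anc_chain:
  assumes "v \<in> V"
  shows "\<forall>a b. (a, v) \<in> E\<^sup>* \<longrightarrow> (b, v) \<in> E\<^sup>* \<longrightarrow> (a, b) \<in> E\<^sup>* \<or> (b, a) \<in> E\<^sup>*"
  using reach[OF assms]
proof (induction rule: rtrancl_induct)
  case base
  then show ?case using to_r by blast
next
  case (step y z)
  have h: "a = z \<or> (a, y) \<in> E\<^sup>*" if "(a, z) \<in> E\<^sup>*" for a
    using that
  proof (cases rule: rtranclE)
    case (step w)
    then have "w = y" using parent_unique step.hyps(2) by blast
    then show ?thesis using step by blast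
  qed simp
  show ?case
  proof (intro allI impI)
    fix a b assume a: "(a, z) \<in> E\<^sup>*" and b: "(b, z) \<in> E\<^sup>*"
    show "(a, b) \<in> E\<^sup>* \<or> (b, a) \<in> E\<^sup>*"
    proof (cases "a = z")
      case True then show ?thesis using b by simp
    next
      case False
      then have ay: "(a, y) \<in> E\<^sup>*" using h[OF a] by simp
      show ?thesis
      proof (cases "b = z")
        case True then show ?thesis using a by simp
      next
        case False
        then have "(b, y) \<in> E\<^sup>*" using h[OF b] by simp
        then show ?thesis using step.IH ay by simp
      qed
    qed
  qed
qed

lemma chV: "c \<in> ch \<Longrightarrow> c \<in> V" using sub unfolding ch_def by auto

lemma child_neq_r: "c \<in> ch \<Longrightarrow> c \<noteq> r" using noin unfolding ch_def by auto

lemma into_child: "c \<in> ch \<Longrightarrow> (v, c) \<in> E\<^sup>* \<Longrightarrow> v \<noteq> r \<Longrightarrow> v = c"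
proof -
  assume c: "c \<in> ch" and vc: "(v, c) \<in> E\<^sup>*" and vr: "v \<noteq> r"
  from vc show "v = c"
  proof (cases rule: rtranclE)
    case (step w)
    then have "w = r" using parent_unique c unfolding ch_def by blast
    then show ?thesis using step to_r vr by blast
  qed simp
qed

lemma W_sub: "c \<in> ch \<Longrightarrow> W c \<subseteq> V - {r}"
proof
  fix v assume c: "c \<in> ch" and v: "v \<in> W c"
  then have cv: "(c, v) \<in> E\<^sup>*" unfolding W_def by auto
  have "v \<in> V" using star_V[OF cv chV[OF c]] .
  moreover have "v \<noteq> r"
  proof
    assume "v = r"
    then have "c = r" using cv to_r by simp
    then show False using child_neq_r c by simp
  qed
  ultimately show "v \<in> V - {r}" by simp
qed

lemma r_notin_W: "c \<in> ch \<Longrightarrow> r \<notin> W c" using W_sub by blast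

lemma W_closed: "u \<in> W c \<Longrightarrow> (u, v) \<in> E\<^sup>* \<Longrightarrow> v \<in> W c"
  unfolding W_def by auto

lemma c_in_W: "c \<in> W c" unfolding W_def by auto

lemma W_disj: "c \<in> ch \<Longrightarrow> c' \<in> ch \<Longrightarrow> c \<noteq> c' \<Longrightarrow> W c \<inter> W c' = {}"
proof (rule ccontr)
  assume c: "c \<in> ch" and c': "c' \<in> ch" and ne: "c \<noteq> c'" and "W c \<inter> W c' \<noteq> {}"
  then obtain v where v: "(c, v) \<in> E\<^sup>*" "(c', v) \<in> E\<^sup>*" unfolding W_def by auto
  have "v \<in> V" using star_V[OF v(1) chV[OF c]] .
  then have "(c, c') \<in> E\<^sup>* \<or> (c', c) \<in> E\<^sup>*" using anc_chain v by blast
  moreover have "c \<noteq> r" "c' \<noteq> r" using child_neq_r c c' by auto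
  ultimately show False
    using into_child[OF c, of c'] into_child[OF c', of c] ne by auto
qed

lemma cross: "c \<in> ch \<Longrightarrow> c' \<in> ch \<Longrightarrow> c \<noteq> c' \<Longrightarrow> u \<in> W c \<Longrightarrow> v \<in> W c' \<Longrightarrow> (u, v) \<notin> E\<^sup>*"
proof
  assume c: "c \<in> ch" "c' \<in> ch" "c \<noteq> c'" and u: "u \<in> W c" and v: "v \<in> W c'" and uv: "(u, v) \<in> E\<^sup>*"
  have "v \<in> W c" using W_closed[OF u uv] .
  then show False using W_disj[OF c] v by blast
qed

lemma cover: "V - {r} = (\<Union>c\<in>ch. W c)"
proof
  show "V - {r} \<subseteq> (\<Union>c\<in>ch. W c)"
  proof
    fix v assume v: "v \<in> V - {r}"
    then have "(r, v) \<in> E\<^sup>*" using reach by auto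
    then show "v \<in> (\<Union>c\<in>ch. W c)"
    proof (cases rule: converse_rtranclE)
      case base then show ?thesis using v by auto
    next
      case (step c) then show ?thesis unfolding ch_def W_def by auto
    qed
  qed
  show "(\<Union>c\<in>ch. W c) \<subseteq> V - {r}" using W_sub by blast
qed

lemma edge_cases: "(a, b) \<in> E \<Longrightarrow> (a = r \<and> b \<in> ch) \<or> (\<exists>c\<in>ch. a \<in> W c \<and> b \<in> W c)"
proof -
  assume e: "(a, b) \<in> E"
  have aV: "a \<in> V" using e sub by auto
  show ?thesis
  proof (cases "a = r")
    case True then show ?thesis using e unfolding ch_def by auto
  next
    case False
    then obtain c where "c \<in> ch" "a \<in> W c" using cover aV by blast
    moreover have "b \<in> W c" using W_closed[OF \<open>a \<in> W c\<close>, of b] r_into_rtrancl[OF e] by simp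
    ultimately show ?thesis by blast
  qed
qed

lemma W_restrict: "u \<in> W c \<Longrightarrow> (u, v) \<in> E\<^sup>* \<Longrightarrow> (u, v) \<in> (E \<inter> W c \<times> W c)\<^sup>*"
proof -
  assume u: "u \<in> W c" and uv: "(u, v) \<in> E\<^sup>*"
  from uv show ?thesis
  proof (induction rule: rtrancl_induct)
    case base then show ?case by simp
  next
    case (step y z)
    have "y \<in> W c" using W_closed u step.hyps(1) .
    moreover have "z \<in> W c" using W_closed[OF u, of z] rtrancl_into_rtrancl[OF step.hyps(1,2)] by simp
    ultimately have "(y, z) \<in> E \<inter> W c \<times> W c" using step.hyps(2) by simp
    then show ?case using rtrancl_into_rtrancl[OF step.IH] by blast
  qed
qed

lemma star_restrict: "u \<in> W c \<Longrightarrow> ((u, v) \<in> (E \<inter> W c \<times> W c)\<^sup>*) = ((u, v) \<in> E\<^sup>*)"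
proof
  assume "(u, v) \<in> (E \<inter> W c \<times> W c)\<^sup>*"
  moreover have "(E \<inter> W c \<times> W c)\<^sup>* \<subseteq> E\<^sup>*" by (rule rtrancl_mono) blast
  ultimately show "(u, v) \<in> E\<^sup>*" by (rule subsetD[rotated])
next
  assume "u \<in> W c" "(u, v) \<in> E\<^sup>*"
  then show "(u, v) \<in> (E \<inter> W c \<times> W c)\<^sup>*" by (rule W_restrict)
qed

lemma sub_tree: "c \<in> ch \<Longrightarrow> rooted_tree (W c) (E \<inter> W c \<times> W c) c"
proof -
  assume c: "c \<in> ch"
  have fW: "finite (W c)" using W_sub[OF c] fin finite_subset by blast
  have nc: "(u, c) \<notin> E \<inter> W c \<times> W c" for u
  proof
    assume "(u, c) \<in> E \<inter> W c \<times> W c"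
    then have "u = r" "u \<in> W c" using parent_unique c unfolding ch_def by auto
    then show False using r_notin_W c by auto
  qed
  have un: "\<exists>!u. (u, v) \<in> E \<inter> W c \<times> W c" if v: "v \<in> W c" "v \<noteq> c" for v
  proof -
    have "(c, v) \<in> E\<^sup>*" using v unfolding W_def by auto
    then obtain z where z: "(c, z) \<in> E\<^sup>*" "(z, v) \<in> E" using v(2) by (cases rule: rtranclE) auto
    have "z \<in> W c" using z unfolding W_def by auto
    then have "(z, v) \<in> E \<inter> W c \<times> W c" using z v by auto
    then show ?thesis using parent_unique by blast
  qed
  have rc: "(c, v) \<in> (E \<inter> W c \<times> W c)\<^sup>*" if "v \<in> W c" for v
    using star_restrict[OF c_in_W] that unfolding W_def by auto
  show ?thesis unfolding rooted_tree_def
  proof (intro conjI)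
    show "E \<inter> W c \<times> W c \<subseteq> W c \<times> W c" by blast
    show "\<forall>u. (u, c) \<notin> E \<inter> W c \<times> W c" using nc by blast
    show "\<forall>v\<in>W c. v \<noteq> c \<longrightarrow> (\<exists>!u. (u, v) \<in> E \<inter> W c \<times> W c)" using un by blast
    show "\<forall>v\<in>W c. (c, v) \<in> (E \<inter> W c \<times> W c)\<^sup>*" using rc by blast
  qed (use fW c_in_W in auto)
qed

lemma card_W: "c \<in> ch \<Longrightarrow> card (W c) < card V"
proof -
  assume c: "c \<in> ch"
  have "W c \<subset> V" using W_sub[OF c] rV by blast
  then show ?thesis using fin psubset_card_mono by blast
qed

lemma fin_ch: "finite ch"
proof -
  have "ch \<subseteq> V" using chV by blast
  then show ?thesis using fin finite_subset by blast
qed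

end


definition le2 :: "real \<times> real \<Rightarrow> real \<times> real \<Rightarrow> bool" where
  "le2 a b \<longleftrightarrow> fst a \<le> fst b \<and> snd a \<le> snd b"

definition emb :: "nat \<times> nat \<Rightarrow> real \<times> real" where
  "emb ij = (real (fst ij), real (snd ij))"

definition S :: "nat \<Rightarrow> (nat \<times> nat) set" where
  "S n = {(i, j). i + j < n \<and> (i = 0 \<or> n \<le> 2 * i + j)}"

definition G :: "nat \<Rightarrow> (nat \<times> nat) set" where
  "G N = {(i, j). i + j \<le> N \<and> (i = 0 \<or> N + 1 \<le> 2 * i + j) \<and> 1 \<le> i + j}"

lemma conv_ge: "0 \<le> u \<Longrightarrow> u \<le> 1 \<Longrightarrow> k \<le> a \<Longrightarrow> k \<le> b \<Longrightarrow> k \<le> (1 - u) * a + u * (b::real)"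
proof -
  assume h: "0 \<le> u" "u \<le> 1" "k \<le> a" "k \<le> b"
  have "(1 - u) * k \<le> (1 - u) * a" using h by (intro mult_left_mono) auto
  moreover have "u * k \<le> u * b" using h by (intro mult_left_mono) auto
  moreover have "(1 - u) * k + u * k = k" by (simp add: algebra_simps)
  ultimately show ?thesis by linarith
qed

lemma conv_le: "0 \<le> u \<Longrightarrow> u \<le> 1 \<Longrightarrow> a \<le> k \<Longrightarrow> b \<le> k \<Longrightarrow> (1 - u) * a + u * (b::real) \<le> k"
proof -
  assume h: "0 \<le> u" "u \<le> 1" "a \<le> k" "b \<le> k"
  have "(1 - u) * a \<le> (1 - u) * k" using h by (intro mult_left_mono) auto
  moreover have "u * b \<le> u * k" using h by (intro mult_left_mono) auto
  moreover have "(1 - u) * k + u * k = k" by (simp add: algebra_simps)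
  ultimately show ?thesis by linarith
qed

lemma seg_param: "(z::real\<times>real) \<in> closed_segment a b \<Longrightarrow> \<exists>u. 0 \<le> u \<and> u \<le> 1 \<and>
   fst z = (1 - u) * fst a + u * fst b \<and> snd z = (1 - u) * snd a + u * snd b"
proof -
  assume "z \<in> closed_segment a b"
  then obtain u where u: "0 \<le> u" "u \<le> 1" "z = (1 - u) *\<^sub>R a + u *\<^sub>R b"
    unfolding closed_segment_def by blast
  have "fst z = (1 - u) * fst a + u * fst b" "snd z = (1 - u) * snd a + u * snd b"
    using u(3) by simp_all
  then show ?thesis using u(1,2) by blast
qed

lemma seg_fst_ge: "(z::real\<times>real) \<in> closed_segment a b \<Longrightarrow> k \<le> fst a \<Longrightarrow> k \<le> fst b \<Longrightarrow> k \<le> fst z"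
proof -
  assume z: "z \<in> closed_segment a b" and h: "k \<le> fst a" "k \<le> fst b"
  obtain u where u: "0 \<le> u" "u \<le> 1" "fst z = (1 - u) * fst a + u * fst b"
    using seg_param[OF z] by blast
  show ?thesis using conv_ge[OF u(1,2) h] u(3) by simp
qed
lemma seg_snd_ge: "(z::real\<times>real) \<in> closed_segment a b \<Longrightarrow> k \<le> snd a \<Longrightarrow> k \<le> snd b \<Longrightarrow> k \<le> snd z"
proof -
  assume z: "z \<in> closed_segment a b" and h: "k \<le> snd a" "k \<le> snd b"
  obtain u where u: "0 \<le> u" "u \<le> 1" "snd z = (1 - u) * snd a + u * snd b"
    using seg_param[OF z] by blast
  show ?thesis using conv_ge[OF u(1,2) h] u(3) by simp
qed
lemma seg_fst_le: "(z::real\<times>real) \<in> closed_segment a b \<Longrightarrow> fst a \<le> k \<Longrightarrow> fst b \<le> k \<Longrightarrow> fst z \<le> k"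
proof -
  assume z: "z \<in> closed_segment a b" and h: "fst a \<le> k" "fst b \<le> k"
  obtain u where u: "0 \<le> u" "u \<le> 1" "fst z = (1 - u) * fst a + u * fst b"
    using seg_param[OF z] by blast
  show ?thesis using conv_le[OF u(1,2) h] u(3) by simp
qed
lemma seg_snd_le: "(z::real\<times>real) \<in> closed_segment a b \<Longrightarrow> snd a \<le> k \<Longrightarrow> snd b \<le> k \<Longrightarrow> snd z \<le> k"
proof -
  assume z: "z \<in> closed_segment a b" and h: "snd a \<le> k" "snd b \<le> k"
  obtain u where u: "0 \<le> u" "u \<le> 1" "snd z = (1 - u) * snd a + u * snd b"
    using seg_param[OF z] by blast
  show ?thesis using conv_le[OF u(1,2) h] u(3) by simp
qed
lemma seg_sum_ge: "(z::real\<times>real) \<in> closed_segment a b \<Longrightarrow> k \<le> fst a + snd a \<Longrightarrow> k \<le> fst b + snd b \<Longrightarrow> k \<le> fst z + snd z"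
proof -
  assume z: "z \<in> closed_segment a b" and h: "k \<le> fst a + snd a" "k \<le> fst b + snd b"
  obtain u where u: "0 \<le> u" "u \<le> 1" "fst z = (1 - u) * fst a + u * fst b" "snd z = (1 - u) * snd a + u * snd b"
    using seg_param[OF z] by blast
  have "fst z + snd z = (1 - u) * (fst a + snd a) + u * (fst b + snd b)"
    using u by (simp add: algebra_simps)
  then show ?thesis using conv_ge[OF u(1,2) h] by simp
qed

lemma seg_le2_upper: "z \<in> closed_segment a b \<Longrightarrow> le2 a c \<Longrightarrow> le2 b c \<Longrightarrow> le2 z c"
  unfolding le2_def using seg_fst_le seg_snd_le by blast
lemma seg_le2_lower: "z \<in> closed_segment a b \<Longrightarrow> le2 c a \<Longrightarrow> le2 c b \<Longrightarrow> le2 c z"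
  unfolding le2_def using seg_fst_ge seg_snd_ge by blast

lemma seg_shift: "(z \<in> closed_segment (a + d) (b + d)) = (z - d \<in> closed_segment a b)"
proof -
  have e: "closed_segment (a + d) (b + d) = (+) d ` closed_segment a b"
    using closed_segment_translation[of d a b] by (simp add: add.commute)
  show ?thesis unfolding e by (force simp: image_iff)
qed

lemma seg0: "z \<in> closed_segment 0 P \<Longrightarrow> \<exists>s. 0 \<le> s \<and> s \<le> 1 \<and> z = s *\<^sub>R P"
  by (auto simp: closed_segment_def)

lemma seg0I: "0 \<le> s \<Longrightarrow> s \<le> 1 \<Longrightarrow> s *\<^sub>R P \<in> closed_segment 0 P"
  by (auto simp: closed_segment_def)

lemma rays:
  assumes "z \<in> closed_segment 0 P" "z \<in> closed_segment 0 Q" "z \<noteq> 0"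
  shows "P \<in> closed_segment 0 Q \<or> Q \<in> closed_segment 0 P"
proof -
  obtain s where s: "0 \<le> s" "s \<le> 1" "z = s *\<^sub>R P" using seg0[OF assms(1)] by blast
  obtain t where t: "0 \<le> t" "t \<le> 1" "z = t *\<^sub>R Q" using seg0[OF assms(2)] by blast
  have s0: "s \<noteq> 0" using s assms(3) by auto
  have t0: "t \<noteq> 0" using t assms(3) by auto
  show ?thesis
  proof (cases "t \<le> s")
    case True
    have "P = (t / s) *\<^sub>R Q"
    proof -
      have "P = (1 / s) *\<^sub>R (s *\<^sub>R P)" using s0 by simp
      also have "\<dots> = (1 / s) *\<^sub>R (t *\<^sub>R Q)" using s t by simp
      also have "\<dots> = (t / s) *\<^sub>R Q" by simp
      finally show ?thesis .
    qed
    moreover have "0 \<le> t / s" "t / s \<le> 1" using True s t s0 by auto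
    ultimately show ?thesis using seg0I by metis
  next
    case False
    have "Q = (s / t) *\<^sub>R P"
    proof -
      have "Q = (1 / t) *\<^sub>R (t *\<^sub>R Q)" using t0 by simp
      also have "\<dots> = (1 / t) *\<^sub>R (s *\<^sub>R P)" using s t by simp
      also have "\<dots> = (s / t) *\<^sub>R P" by simp
      finally show ?thesis .
    qed
    moreover have "0 \<le> s / t" "s / t \<le> 1" using False s t t0 by auto
    ultimately show ?thesis using seg0I by metis
  qed
qed

lemma planarI:
  assumes "\<And>a b w. (a, b) \<in> E \<Longrightarrow> w \<in> V \<Longrightarrow> w \<noteq> a \<Longrightarrow> w \<noteq> b \<Longrightarrow> p w \<notin> closed_segment (p a) (p b)"
    and "\<And>a b c d z. (a, b) \<in> E \<Longrightarrow> (c, d) \<in> E \<Longrightarrow> (a, b) \<noteq> (c, d) \<Longrightarrow>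
     z \<in> closed_segment (p a) (p b) \<Longrightarrow> z \<in> closed_segment (p c) (p d) \<Longrightarrow> z \<in> p ` ({a, b} \<inter> {c, d})"
  shows "planar_straight_line V E p"
  unfolding planar_straight_line_def
proof (intro conjI)
  show "\<forall>(a, b)\<in>E. \<forall>w\<in>V. w \<noteq> a \<and> w \<noteq> b \<longrightarrow> p w \<notin> closed_segment (p a) (p b)"
    using assms(1) by blast
  show "\<forall>(a, b)\<in>E. \<forall>(c, d)\<in>E. (a, b) \<noteq> (c, d) \<longrightarrow>
        closed_segment (p a) (p b) \<inter> closed_segment (p c) (p d) \<subseteq> p ` ({a, b} \<inter> {c, d})"
    using assms(2) by (clarsimp simp only: subset_iff) blast
qed

lemma planarD1: "planar_straight_line V E p \<Longrightarrow> (a, b) \<in> E \<Longrightarrow> w \<in> V \<Longrightarrow> w \<noteq> a \<Longrightarrow> w \<noteq> b \<Longrightarrow> p w \<notin> closed_segment (p a) (p b)"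
  unfolding planar_straight_line_def by fastforce
lemma planarD2: "planar_straight_line V E p \<Longrightarrow> (a, b) \<in> E \<Longrightarrow> (c, d) \<in> E \<Longrightarrow> (a, b) \<noteq> (c, d) \<Longrightarrow>
     z \<in> closed_segment (p a) (p b) \<Longrightarrow> z \<in> closed_segment (p c) (p d) \<Longrightarrow> z \<in> p ` ({a, b} \<inter> {c, d})"
  unfolding planar_straight_line_def by fastforce



definition TD :: "'a set \<Rightarrow> ('a \<times> 'a) set \<Rightarrow> 'a \<Rightarrow> ('a \<Rightarrow> real \<times> real) \<Rightarrow> bool" where
  "TD V E r p \<longleftrightarrow> dominance_drawing V E p \<and> planar_straight_line V E p \<and> p r = (0, 0) \<and>
     p ` V \<subseteq> emb ` S (card V)"

lemma emb_G: "ij \<in> G N \<Longrightarrow> 0 \<le> fst (emb ij) \<and> 0 \<le> snd (emb ij) \<and> 1 \<le> fst (emb ij) + snd (emb ij)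
   \<and> fst (emb ij) + snd (emb ij) \<le> real N"
  by (cases ij) (auto simp: G_def emb_def simp flip: of_nat_add)

lemma emb_S: "ij \<in> S n \<Longrightarrow> 0 \<le> fst (emb ij) \<and> 0 \<le> snd (emb ij) \<and> fst (emb ij) + snd (emb ij) + 1 \<le> real n"
proof (cases ij)
  case (Pair i j)
  assume "ij \<in> S n"
  then have "i + j + 1 \<le> n" using Pair by (auto simp: S_def)
  then have "real (i + j + 1) \<le> real n" by linarith
  then show ?thesis using Pair by (simp add: emb_def)
qed

lemma le2_refl: "le2 a a" by (simp add: le2_def)


lemma le2_shift: "le2 (a + d) (b + d) = le2 a b" by (simp add: le2_def)

lemma le2_antisym: "le2 a b \<Longrightarrow> le2 b a \<Longrightarrow> a = b"
  by (cases a, cases b) (auto simp: le2_def)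

lemma emb_add: "emb (i, j) + (real a, real b) = emb (i + a, j + b)"
  by (simp add: emb_def)

lemma planar_shift:
  assumes pl: "planar_straight_line V E q"
  shows "planar_straight_line V E (\<lambda>v. q v + d)"
proof (rule planarI)
  fix a b w assume "(a, b) \<in> E" "w \<in> V" "w \<noteq> a" "w \<noteq> b"
  then have "q w \<notin> closed_segment (q a) (q b)" using planarD1[OF pl] by blast
  then show "q w + d \<notin> closed_segment (q a + d) (q b + d)" by (simp add: seg_shift)
next
  fix a b c e z assume h: "(a, b) \<in> E" "(c, e) \<in> E" "(a, b) \<noteq> (c, e)"
    and z: "z \<in> closed_segment (q a + d) (q b + d)" "z \<in> closed_segment (q c + d) (q e + d)"
  have "z - d \<in> q ` ({a, b} \<inter> {c, e})"
    using planarD2[OF pl h] z by (simp add: seg_shift)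
  then obtain x where "x \<in> {a, b} \<inter> {c, e}" "z - d = q x" by blast
  then show "z \<in> (\<lambda>v. q v + d) ` ({a, b} \<inter> {c, e})"
    by (metis (no_types, lifting) diff_add_cancel image_eqI)
qed

context rtree begin

definition F where "F R = (\<Union>c\<in>R. W c)"

definition FD where "FD R p \<longleftrightarrow> inj_on p (F R) \<and>
   (\<forall>u\<in>F R. \<forall>v\<in>F R. (u, v) \<in> E\<^sup>* \<longleftrightarrow> le2 (p u) (p v)) \<and>
   planar_straight_line (F R) (E \<inter> F R \<times> F R) p \<and>
   (\<forall>\<rho>\<in>R. \<forall>a b z. (a, b) \<in> E \<inter> F R \<times> F R \<longrightarrow> z \<in> closed_segment (p a) (p b) \<longrightarrow> le2 z (p \<rho>) \<longrightarrow> z = p \<rho>) \<and>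
   p ` F R \<subseteq> emb ` G (card (F R))"

lemma F_ch: "F ch = V - {r}" unfolding F_def using cover by simp

lemma edge_dich: "(a, b) \<in> E \<Longrightarrow> (a = r \<and> b \<in> ch) \<or> (a, b) \<in> E \<inter> (V - {r}) \<times> (V - {r})"
  using edge_cases W_sub by blast

lemma F_sub: "R \<subseteq> ch \<Longrightarrow> F R \<subseteq> V - {r}" unfolding F_def using W_sub by blast

lemma fin_F: "R \<subseteq> ch \<Longrightarrow> finite (F R)" using F_sub fin finite_subset by blast

lemma fin_W: "c \<in> ch \<Longrightarrow> finite (W c)" using W_sub fin finite_subset by blast

lemma base:
  assumes c: "c \<in> ch" and TD: "TD (W c) (E \<inter> W c \<times> W c) c q"
  shows "FD {c} (\<lambda>v. q v + (0, 1))"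
proof -
  define p where "p = (\<lambda>v. q v + ((0, 1)::real \<times> real))"
  have FW: "F {c} = W c" unfolding F_def by simp
  have dd: "dominance_drawing (W c) (E \<inter> W c \<times> W c) q" and pl: "planar_straight_line (W c) (E \<inter> W c \<times> W c) q"
    and qc: "q c = (0, 0)" and pts: "q ` W c \<subseteq> emb ` S (card (W c))"
    using TD unfolding TD_def by blast+
  have inj: "inj_on q (W c)" using dd unfolding dominance_drawing_def by blast
  have dom: "(u, v) \<in> E\<^sup>* \<longleftrightarrow> le2 (q u) (q v)" if "u \<in> W c" "v \<in> W c" for u v
    using dd that star_restrict[OF that(1)] unfolding dominance_drawing_def le2_def by blast
  have qv: "\<exists>ij. ij \<in> S (card (W c)) \<and> q v = emb ij" if "v \<in> W c" for v
    using pts that by blast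
  have qge: "le2 (0, 0) (q v)" if "v \<in> W c" for v
    using qv[OF that] emb_S unfolding le2_def by fastforce
  have FD1: "inj_on p (W c)" using inj unfolding p_def inj_on_def by simp
  have FD2: "\<forall>u\<in>W c. \<forall>v\<in>W c. (u, v) \<in> E\<^sup>* \<longleftrightarrow> le2 (p u) (p v)"
    using dom unfolding p_def le2_shift by blast
  have FD3: "planar_straight_line (W c) (E \<inter> W c \<times> W c) p" unfolding p_def by (rule planar_shift[OF pl])
  have FD4: "\<forall>\<rho>\<in>{c}. \<forall>a b z. (a, b) \<in> E \<inter> W c \<times> W c \<longrightarrow> z \<in> closed_segment (p a) (p b) \<longrightarrow> le2 z (p \<rho>) \<longrightarrow> z = p \<rho>"
  proof (intro ballI allI impI)
    fix \<rho> a b z assume "\<rho> \<in> {c}" and ab: "(a, b) \<in> E \<inter> W c \<times> W c" and z: "z \<in> closed_segment (p a) (p b)" and le: "le2 z (p \<rho>)"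
    have pc: "p \<rho> = (0, 1)" using \<open>\<rho> \<in> {c}\<close> qc unfolding p_def by simp
    have "le2 (0, 1) (p a)" "le2 (0, 1) (p b)" using qge ab unfolding p_def le2_def by auto
    then have "le2 (0, 1) z" using seg_le2_lower z by blast
    then show "z = p \<rho>" using le pc le2_antisym by metis
  qed
  have FD5: "p ` W c \<subseteq> emb ` G (card (W c))"
  proof
    fix y assume "y \<in> p ` W c"
    then obtain v where v: "v \<in> W c" "y = p v" by blast
    obtain i j where ij: "(i, j) \<in> S (card (W c))" "q v = emb (i, j)" using qv[OF v(1)] by auto
    have "y = emb (i, j + 1)" using v ij unfolding p_def emb_def by simp
    moreover have "(i, j + 1) \<in> G (card (W c))" using ij(1) by (auto simp: S_def G_def)
    ultimately show "y \<in> emb ` G (card (W c))" by blast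
  qed
  show ?thesis unfolding FD_def FW p_def[symmetric] using FD1 FD2 FD3 FD4 FD5 by blast
qed

lemma merge:
  assumes c: "c \<in> ch" and R': "R' \<subseteq> ch" "c \<notin> R'" and sz: "card (W c) \<le> card (F R') + 1"
    and FD': "FD R' p1" and TD: "TD (W c) (E \<inter> W c \<times> W c) c q"
  shows "FD (insert c R') (\<lambda>v. if v \<in> W c then q v + (real (card (F R')) + 1, 0) else p1 v + (0, real (card (W c))))"
proof -
  define N where "N = card (F R')"
  define m where "m = card (W c)"
  define pW where "pW = (\<lambda>v. q v + (real N + 1, 0))"
  define pF where "pF = (\<lambda>v. p1 v + (0, real m))"
  define p where "p = (\<lambda>v. if v \<in> W c then pW v else pF v)"
  define F' where "F' = F R'"
  have pdef: "(\<lambda>v. if v \<in> W c then q v + (real (card (F R')) + 1, 0) else p1 v + (0, real (card (W c)))) = p"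
    unfolding p_def pW_def pF_def N_def m_def by simp
  have NF: "N = card F'" unfolding N_def F'_def ..
  have FR: "F (insert c R') = W c \<union> F'" unfolding F_def F'_def by simp
  have disj: "W c \<inter> F' = {}" unfolding F'_def F_def using W_disj c R' by blast
  have pWv: "v \<in> W c \<Longrightarrow> p v = pW v" for v unfolding p_def by simp
  have pFv: "v \<in> F' \<Longrightarrow> p v = pF v" for v unfolding p_def using disj by auto
  have inj1: "inj_on p1 F'" and dom1: "\<And>u v. u \<in> F' \<Longrightarrow> v \<in> F' \<Longrightarrow> (u, v) \<in> E\<^sup>* \<longleftrightarrow> le2 (p1 u) (p1 v)"
    and pl1: "planar_straight_line F' (E \<inter> F' \<times> F') p1"
    and quad1: "\<And>\<rho> a b z. \<rho> \<in> R' \<Longrightarrow> (a, b) \<in> E \<inter> F' \<times> F' \<Longrightarrow> z \<in> closed_segment (p1 a) (p1 b) \<Longrightarrow> le2 z (p1 \<rho>) \<Longrightarrow> z = p1 \<rho>"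
    and pts1: "p1 ` F' \<subseteq> emb ` G N"
  proof -
    have FD'': "inj_on p1 F' \<and>
   (\<forall>u\<in>F'. \<forall>v\<in>F'. (u, v) \<in> E\<^sup>* \<longleftrightarrow> le2 (p1 u) (p1 v)) \<and>
   planar_straight_line F' (E \<inter> F' \<times> F') p1 \<and>
   (\<forall>\<rho>\<in>R'. \<forall>a b z. (a, b) \<in> E \<inter> F' \<times> F' \<longrightarrow> z \<in> closed_segment (p1 a) (p1 b) \<longrightarrow> le2 z (p1 \<rho>) \<longrightarrow> z = p1 \<rho>) \<and>
   p1 ` F' \<subseteq> emb ` G N" using FD' unfolding FD_def F'_def[symmetric] NF[symmetric] .
    show "inj_on p1 F'" using FD'' by (elim conjE)
    show "\<And>u v. u \<in> F' \<Longrightarrow> v \<in> F' \<Longrightarrow> (u, v) \<in> E\<^sup>* \<longleftrightarrow> le2 (p1 u) (p1 v)" using FD'' by (elim conjE) blast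
    show "planar_straight_line F' (E \<inter> F' \<times> F') p1" using FD'' by (elim conjE)
    show "\<And>\<rho> a b z. \<rho> \<in> R' \<Longrightarrow> (a, b) \<in> E \<inter> F' \<times> F' \<Longrightarrow> z \<in> closed_segment (p1 a) (p1 b) \<Longrightarrow> le2 z (p1 \<rho>) \<Longrightarrow> z = p1 \<rho>"
      using FD'' by (elim conjE) blast
    show "p1 ` F' \<subseteq> emb ` G N" using FD'' by (elim conjE)
  qed
  have ddq: "dominance_drawing (W c) (E \<inter> W c \<times> W c) q" and plq: "planar_straight_line (W c) (E \<inter> W c \<times> W c) q"
    and qc: "q c = (0, 0)" and ptsq: "q ` W c \<subseteq> emb ` S m"
    using TD unfolding TD_def m_def by blast+
  have injq: "inj_on q (W c)" using ddq unfolding dominance_drawing_def by blast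
  have domq: "(u, v) \<in> E\<^sup>* \<longleftrightarrow> le2 (q u) (q v)" if "u \<in> W c" "v \<in> W c" for u v
    using ddq that star_restrict[OF that(1)] unfolding dominance_drawing_def le2_def by blast
  have qv: "\<exists>ij. ij \<in> S m \<and> q v = emb ij" if "v \<in> W c" for v using ptsq that by blast
  have p1v: "\<exists>ij. ij \<in> G N \<and> p1 v = emb ij" if "v \<in> F'" for v using pts1 that by blast
  have bW: "0 \<le> fst (q v) \<and> 0 \<le> snd (q v) \<and> snd (q v) + 1 \<le> real m" if vW: "v \<in> W c" for v
  proof -
    obtain ij where "ij \<in> S m" "q v = emb ij" using qv[OF vW] by blast
    then show ?thesis using emb_S[of ij m] by simp
  qed
  have bF: "0 \<le> fst (p1 v) \<and> fst (p1 v) \<le> real N \<and> 0 \<le> snd (p1 v)" if vF: "v \<in> F'" for v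
  proof -
    obtain ij where "ij \<in> G N" "p1 v = emb ij" using p1v[OF vF] by blast
    then show ?thesis using emb_G[of ij N] by simp
  qed
  have bpW: "real N + 1 \<le> fst (pW v) \<and> snd (pW v) + 1 \<le> real m \<and> 0 \<le> snd (pW v)" if "v \<in> W c" for v
    using bW[OF that] unfolding pW_def by simp
  have bpF: "fst (pF v) \<le> real N \<and> real m \<le> snd (pF v)" if "v \<in> F'" for v
    using bF[OF that] unfolding pF_def by simp
  have segW: "real N + 1 \<le> fst z" if "(a, b) \<in> E \<inter> W c \<times> W c" "z \<in> closed_segment (pW a) (pW b)" for a b z
    using seg_fst_ge[OF that(2)] bpW that(1) by blast
  have segF: "fst z \<le> real N \<and> real m \<le> snd z" if "(a, b) \<in> E \<inter> F' \<times> F'" "z \<in> closed_segment (pF a) (pF b)" for a b z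
    using seg_fst_le[OF that(2)] seg_snd_ge[OF that(2)] bpF that(1) by blast
  have esplit: "(a, b) \<in> E \<inter> W c \<times> W c \<or> (a, b) \<in> E \<inter> F' \<times> F'"
    if "(a, b) \<in> E \<inter> F (insert c R') \<times> F (insert c R')" for a b
  proof -
    have ab: "(a, b) \<in> E" and a: "a \<in> W c \<union> F'" using that FR by auto
    have bs: "b \<in> W d" if "a \<in> W d" for d using W_closed[OF that] r_into_rtrancl[OF ab] .
    show ?thesis
    proof (cases "a \<in> W c")
      case True then show ?thesis using bs ab by blast
    next
      case False
      then obtain d where "d \<in> R'" "a \<in> W d" using a unfolding F'_def F_def by blast
      then have "b \<in> F'" using bs unfolding F'_def F_def by blast
      then show ?thesis using ab a False by blast
    qed
  qed
  have crossWF: "(u, v) \<notin> E\<^sup>* \<and> (v, u) \<notin> E\<^sup>*" if uv: "u \<in> W c" "v \<in> F'" for u v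
  proof -
    obtain d where d: "d \<in> R'" "v \<in> W d" using uv(2) unfolding F'_def F_def by blast
    have "d \<in> ch" "c \<noteq> d" using d R' by auto
    then show ?thesis using cross c uv(1) d(2) by blast
  qed
  have plW: "planar_straight_line (W c) (E \<inter> W c \<times> W c) pW" unfolding pW_def by (rule planar_shift[OF plq])
  have plF: "planar_straight_line F' (E \<inter> F' \<times> F') pF" unfolding pF_def by (rule planar_shift[OF pl1])
  have G1: "inj_on p (F (insert c R'))"
  proof (rule inj_onI)
    fix u v assume u: "u \<in> F (insert c R')" and v: "v \<in> F (insert c R')" and e: "p u = p v"
    show "u = v"
    proof (cases "u \<in> W c")
      case uW: True
      show ?thesis
      proof (cases "v \<in> W c")
        case True
        then show ?thesis using e uW injq pWv unfolding pW_def inj_on_def by simp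
      next
        case False
        then have vF: "v \<in> F'" using v FR by blast
        have "fst (pW u) = fst (pF v)" using e pWv[OF uW] pFv[OF vF] by simp
        then show ?thesis using bpW[OF uW] bpF[OF vF] by linarith
      qed
    next
      case uF: False
      then have uF': "u \<in> F'" using u FR by blast
      show ?thesis
      proof (cases "v \<in> W c")
        case vW: True
        have "fst (pW v) = fst (pF u)" using e pWv[OF vW] pFv[OF uF'] by simp
        then show ?thesis using bpW[OF vW] bpF[OF uF'] by linarith
      next
        case False
        then have "v \<in> F'" using v FR by blast
        then show ?thesis using e uF' inj1 pFv unfolding pF_def inj_on_def by simp
      qed
    qed
  qed
  have G2: "\<forall>u\<in>F (insert c R'). \<forall>v\<in>F (insert c R'). (u, v) \<in> E\<^sup>* \<longleftrightarrow> le2 (p u) (p v)"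
  proof (intro ballI)
    fix u v assume u: "u \<in> F (insert c R')" and v: "v \<in> F (insert c R')"
    show "(u, v) \<in> E\<^sup>* \<longleftrightarrow> le2 (p u) (p v)"
    proof (cases "u \<in> W c")
      case uW: True
      show ?thesis
      proof (cases "v \<in> W c")
        case True
        then show ?thesis using uW domq pWv unfolding pW_def by (simp add: le2_shift)
      next
        case False
        then have vF: "v \<in> F'" using v FR by blast
        have "\<not> le2 (p u) (p v)" using pWv[OF uW] pFv[OF vF] bpW[OF uW] bpF[OF vF] unfolding le2_def by auto
        then show ?thesis using crossWF[OF uW vF] by simp
      qed
    next
      case uF: False
      then have uF': "u \<in> F'" using u FR by blast
      show ?thesis
      proof (cases "v \<in> W c")
        case vW: True
        have "\<not> le2 (p u) (p v)" using pWv[OF vW] pFv[OF uF'] bpW[OF vW] bpF[OF uF'] unfolding le2_def by auto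
        then show ?thesis using crossWF[OF vW uF'] by simp
      next
        case False
        then have "v \<in> F'" using v FR by blast
        then show ?thesis using uF' dom1 pFv unfolding pF_def by (simp add: le2_shift)
      qed
    qed
  qed
  have imgW: "p ` X = pW ` X" if "X \<subseteq> W c" for X using pWv that by (intro image_cong) auto
  have imgF: "p ` X = pF ` X" if "X \<subseteq> F'" for X using pFv that by (intro image_cong) auto
  have G3: "planar_straight_line (F (insert c R')) (E \<inter> F (insert c R') \<times> F (insert c R')) p"
  proof (rule planarI)
    fix a b w assume ab: "(a, b) \<in> E \<inter> F (insert c R') \<times> F (insert c R')" and w: "w \<in> F (insert c R')"
      and wa: "w \<noteq> a" and wb: "w \<noteq> b"
    show "p w \<notin> closed_segment (p a) (p b)"
    proof (cases "(a, b) \<in> E \<inter> W c \<times> W c")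
      case abW: True
      then have pa: "p a = pW a" "p b = pW b" using pWv by auto
      show ?thesis
      proof (cases "w \<in> W c")
        case True
        then show ?thesis using planarD1[OF plW abW True wa wb] pa pWv by simp
      next
        case False
        then have wF: "w \<in> F'" using w FR by blast
        show ?thesis
        proof
          assume "p w \<in> closed_segment (p a) (p b)"
          then have "real N + 1 \<le> fst (p w)" using segW[OF abW] pa by simp
          then show False using bpF[OF wF] pFv[OF wF] by simp
        qed
      qed
    next
      case False
      then have abF: "(a, b) \<in> E \<inter> F' \<times> F'" using esplit ab by blast
      then have pa: "p a = pF a" "p b = pF b" using pFv by auto
      show ?thesis
      proof (cases "w \<in> W c")
        case wW: True
        show ?thesis
        proof
          assume "p w \<in> closed_segment (p a) (p b)"
          then have "fst (p w) \<le> real N" using segF[OF abF] pa by simp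
          then show False using bpW[OF wW] pWv[OF wW] by simp
        qed
      next
        case False
        then have wF: "w \<in> F'" using w FR by blast
        then show ?thesis using planarD1[OF plF abF wF wa wb] pa pFv by simp
      qed
    qed
  next
    fix a b c' d z assume ab: "(a, b) \<in> E \<inter> F (insert c R') \<times> F (insert c R')"
      and cd: "(c', d) \<in> E \<inter> F (insert c R') \<times> F (insert c R')" and ne: "(a, b) \<noteq> (c', d)"
      and z1: "z \<in> closed_segment (p a) (p b)" and z2: "z \<in> closed_segment (p c') (p d)"
    show "z \<in> p ` ({a, b} \<inter> {c', d})"
    proof (cases "(a, b) \<in> E \<inter> W c \<times> W c")
      case abW: True
      then have pa: "p a = pW a" "p b = pW b" using pWv by auto
      have zW: "real N + 1 \<le> fst z" using segW[OF abW] z1 pa by simp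
      show ?thesis
      proof (cases "(c', d) \<in> E \<inter> W c \<times> W c")
        case cdW: True
        then have pc: "p c' = pW c'" "p d = pW d" using pWv by auto
        have "z \<in> pW ` ({a, b} \<inter> {c', d})" using planarD2[OF plW abW cdW ne] z1 z2 pa pc by simp
        moreover have "p ` ({a, b} \<inter> {c', d}) = pW ` ({a, b} \<inter> {c', d})" using abW by (intro imgW) auto
        ultimately show ?thesis by simp
      next
        case False
        then have cdF: "(c', d) \<in> E \<inter> F' \<times> F'" using esplit cd by blast
        then have pc: "p c' = pF c'" "p d = pF d" using pFv by auto
        have "fst z \<le> real N" using segF[OF cdF] z2 pc by simp
        then show ?thesis using zW by simp
      qed
    next
      case False
      then have abF: "(a, b) \<in> E \<inter> F' \<times> F'" using esplit ab by blast
      then have pa: "p a = pF a" "p b = pF b" using pFv by auto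
      have zF: "fst z \<le> real N" using segF[OF abF] z1 pa by simp
      show ?thesis
      proof (cases "(c', d) \<in> E \<inter> W c \<times> W c")
        case cdW: True
        then have pc: "p c' = pW c'" "p d = pW d" using pWv by auto
        have "real N + 1 \<le> fst z" using segW[OF cdW] z2 pc by simp
        then show ?thesis using zF by simp
      next
        case False
        then have cdF: "(c', d) \<in> E \<inter> F' \<times> F'" using esplit cd by blast
        then have pc: "p c' = pF c'" "p d = pF d" using pFv by auto
        have "z \<in> pF ` ({a, b} \<inter> {c', d})" using planarD2[OF plF abF cdF ne] z1 z2 pa pc by simp
        moreover have "p ` ({a, b} \<inter> {c', d}) = pF ` ({a, b} \<inter> {c', d})" using abF by (intro imgF) auto
        ultimately show ?thesis by simp
      qed
    qed
  qed
  have G4: "\<forall>\<rho>\<in>insert c R'. \<forall>a b z. (a, b) \<in> E \<inter> F (insert c R') \<times> F (insert c R') \<longrightarrow>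
      z \<in> closed_segment (p a) (p b) \<longrightarrow> le2 z (p \<rho>) \<longrightarrow> z = p \<rho>"
  proof (intro ballI allI impI)
    fix \<rho> a b z assume \<rho>: "\<rho> \<in> insert c R'" and ab: "(a, b) \<in> E \<inter> F (insert c R') \<times> F (insert c R')"
      and z: "z \<in> closed_segment (p a) (p b)" and le: "le2 z (p \<rho>)"
    show "z = p \<rho>"
    proof (cases "\<rho> = c")
      case True
      have pc: "p \<rho> = (real N + 1, 0)" using True qc pWv c_in_W unfolding pW_def by simp
      show ?thesis
      proof (cases "(a, b) \<in> E \<inter> W c \<times> W c")
        case abW: True
        then have pa: "p a = pW a" "p b = pW b" using pWv by auto
        have "le2 (real N + 1, 0) (p a)" "le2 (real N + 1, 0) (p b)"
          using pa bpW abW unfolding le2_def by auto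
        then have "le2 (real N + 1, 0) z" using seg_le2_lower[of z "p a" "p b"] z by blast
        then have "le2 (p \<rho>) z" using pc by simp
        then show ?thesis using le le2_antisym by blast
      next
        case False
        then have abF: "(a, b) \<in> E \<inter> F' \<times> F'" using esplit ab by blast
        then have pa: "p a = pF a" "p b = pF b" using pFv by auto
        have "real m \<le> snd z" using segF[OF abF] z pa by simp
        moreover have "1 \<le> m" unfolding m_def using c_in_W fin_W[OF c] card_0_eq by fastforce
        ultimately show ?thesis using le pc unfolding le2_def by simp
      qed
    next
      case False
      then have \<rho>R: "\<rho> \<in> R'" using \<rho> by blast
      have \<rho>F: "\<rho> \<in> F'" using \<rho>R c_in_W unfolding F'_def F_def by blast
      show ?thesis
      proof (cases "(a, b) \<in> E \<inter> W c \<times> W c")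
        case abW: True
        then have pa: "p a = pW a" "p b = pW b" using pWv by auto
        have "real N + 1 \<le> fst z" using segW[OF abW] z pa by simp
        then show ?thesis using le bpF[OF \<rho>F] pFv[OF \<rho>F] unfolding le2_def by simp
      next
        case False
        then have abF: "(a, b) \<in> E \<inter> F' \<times> F'" using esplit ab by blast
        then have pa: "p a = pF a" "p b = pF b" using pFv by auto
        have z': "z - (0, real m) \<in> closed_segment (p1 a) (p1 b)" using z pa unfolding pF_def by (simp add: seg_shift)
        have "le2 (z - (0, real m)) (p1 \<rho>)" using le pFv[OF \<rho>F] unfolding pF_def le2_def by simp
        then have "z - (0, real m) = p1 \<rho>" using quad1[OF \<rho>R abF z'] by blast
        then show ?thesis using pFv[OF \<rho>F] unfolding pF_def by (metis diff_add_cancel)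
      qed
    qed
  qed
  have cardF: "card (F (insert c R')) = m + N"
  proof -
    have "card (W c \<union> F') = card (W c) + card F'"
      using card_Un_disjoint[OF fin_W[OF c] fin_F[OF R'(1)]] disj unfolding F'_def by simp
    then show ?thesis unfolding FR m_def N_def F'_def .
  qed
  have G5: "p ` F (insert c R') \<subseteq> emb ` G (card (F (insert c R')))"
  proof
    fix y assume "y \<in> p ` F (insert c R')"
    then obtain v where v: "v \<in> F (insert c R')" "y = p v" by blast
    show "y \<in> emb ` G (card (F (insert c R')))"
    proof (cases "v \<in> W c")
      case True
      obtain i j where ij: "(i, j) \<in> S m" "q v = emb (i, j)" using qv[OF True] by auto
      have "y = emb (i + (N + 1), j + 0)" using v ij True pWv unfolding pW_def
        by (simp add: emb_def)
      moreover have "(i + (N + 1), j + 0) \<in> G (m + N)" using ij(1) sz unfolding m_def[symmetric] N_def[symmetric]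
        by (auto simp: S_def G_def)
      ultimately show ?thesis unfolding cardF by blast
    next
      case False
      then have vF: "v \<in> F'" using v FR by blast
      obtain i j where ij: "(i, j) \<in> G N" "p1 v = emb (i, j)" using p1v[OF vF] by auto
      have "y = emb (i + 0, j + m)" using v ij vF pFv unfolding pF_def
        by (simp add: emb_def)
      moreover have "(i + 0, j + m) \<in> G (m + N)" using ij(1) by (auto simp: G_def)
      ultimately show ?thesis unfolding cardF by blast
    qed
  qed
  show ?thesis unfolding pdef FD_def using G1 G2 G3 G4 G5 by (intro conjI)
qed

lemma attach:
  assumes FD: "FD ch p"
  shows "TD V E r (p(r := (0, 0)))"
proof -
  define q where "q = p(r := (0, 0))"
  define V' where "V' = V - {r}"
  have inj: "inj_on p V'" and dom: "\<And>u v. u \<in> V' \<Longrightarrow> v \<in> V' \<Longrightarrow> (u, v) \<in> E\<^sup>* \<longleftrightarrow> le2 (p u) (p v)"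
    and pl: "planar_straight_line V' (E \<inter> V' \<times> V') p"
    and quad: "\<And>\<rho> a b z. \<rho> \<in> ch \<Longrightarrow> (a, b) \<in> E \<inter> V' \<times> V' \<Longrightarrow> z \<in> closed_segment (p a) (p b) \<Longrightarrow> le2 z (p \<rho>) \<Longrightarrow> z = p \<rho>"
    and pts: "p ` V' \<subseteq> emb ` G (card V')"
  proof -
    have FD': "inj_on p V' \<and>
   (\<forall>u\<in>V'. \<forall>v\<in>V'. (u, v) \<in> E\<^sup>* \<longleftrightarrow> le2 (p u) (p v)) \<and>
   planar_straight_line V' (E \<inter> V' \<times> V') p \<and>
   (\<forall>\<rho>\<in>ch. \<forall>a b z. (a, b) \<in> E \<inter> V' \<times> V' \<longrightarrow> z \<in> closed_segment (p a) (p b) \<longrightarrow> le2 z (p \<rho>) \<longrightarrow> z = p \<rho>) \<and>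
   p ` V' \<subseteq> emb ` G (card V')" using FD unfolding FD_def F_ch V'_def[symmetric] .
    show "inj_on p V'" using FD' by (elim conjE)
    show "\<And>u v. u \<in> V' \<Longrightarrow> v \<in> V' \<Longrightarrow> (u, v) \<in> E\<^sup>* \<longleftrightarrow> le2 (p u) (p v)" using FD' by (elim conjE) blast
    show "planar_straight_line V' (E \<inter> V' \<times> V') p" using FD' by (elim conjE)
    show "\<And>\<rho> a b z. \<rho> \<in> ch \<Longrightarrow> (a, b) \<in> E \<inter> V' \<times> V' \<Longrightarrow> z \<in> closed_segment (p a) (p b) \<Longrightarrow> le2 z (p \<rho>) \<Longrightarrow> z = p \<rho>"
      using FD' by (elim conjE) blast
    show "p ` V' \<subseteq> emb ` G (card V')" using FD' by (elim conjE)
  qed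
  have pv: "0 \<le> fst (p v) \<and> 0 \<le> snd (p v) \<and> 1 \<le> fst (p v) + snd (p v)" if vV: "v \<in> V'" for v
  proof -
    obtain ij where "ij \<in> G (card V')" "p v = emb ij" proof -
      have "p v \<in> p ` V'" using vV by blast
      then have "p v \<in> emb ` G (card V')" using pts by (rule subsetD[rotated])
      then show ?thesis using that by blast
    qed
    then show ?thesis using emb_G[of ij "card V'"] by simp
  qed
  have qv: "v \<noteq> r \<Longrightarrow> q v = p v" for v unfolding q_def by simp
  have qr: "q r = (0, 0)" unfolding q_def by simp
  have chV': "b \<in> V'" if "b \<in> ch" for b using chV[OF that] child_neq_r[OF that] unfolding V'_def by blast
  have child: "w = b" if "b \<in> ch" "w \<in> V'" "le2 (p w) (p b)" for w b
  proof -
    have "(w, b) \<in> E\<^sup>*" using dom[OF that(2) chV'[OF that(1)]] that(3) by simp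
    then show ?thesis using into_child[OF that(1)] that(2) unfolding V'_def by blast
  qed
  have dich: "(a = r \<and> b \<in> ch) \<or> (a, b) \<in> E \<inter> V' \<times> V'" if "(a, b) \<in> E" for a b
    using edge_dich[OF that] unfolding V'_def .
  have le2_0: "le2 (0, 0) (p v)" if "v \<in> V'" for v using pv[OF that] by (simp add: le2_def)
  have seg0_le: "z \<in> closed_segment (0, 0) (p b) \<Longrightarrow> b \<in> V' \<Longrightarrow> le2 z (p b)" for z b
    using seg_le2_upper[of z "(0,0)" "p b" "p b"] le2_0 le2_refl by blast
  have qV': "v \<in> V' \<Longrightarrow> q v = p v" for v using qv unfolding V'_def by blast
  have rV': "r \<notin> V'" unfolding V'_def by blast
  have VV': "v \<in> V \<Longrightarrow> v \<noteq> r \<Longrightarrow> v \<in> V'" for v unfolding V'_def by blast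
  have qnz: "q v \<noteq> (0, 0)" if "v \<in> V'" for v using pv[OF that] qV'[OF that] by auto
  have dd: "dominance_drawing V E q"
    unfolding dominance_drawing_def
  proof (intro conjI ballI)
    show "inj_on q V"
    proof (rule inj_onI)
      fix u v assume u: "u \<in> V" and v: "v \<in> V" and e: "q u = q v"
      show "u = v"
      proof (cases "u = r")
        case True
        then show ?thesis using e qr qnz VV'[OF v] by metis
      next
        case False
        show ?thesis
        proof (cases "v = r")
          case True then show ?thesis using e qr qnz VV'[OF u] False by metis
        next
          case vF: False
          then show ?thesis using inj e qV' VV' u v False unfolding inj_on_def by metis
        qed
      qed
    qed
    fix u v assume u: "u \<in> V" and v: "v \<in> V"
    show "((u, v) \<in> E\<^sup>*) = (fst (q u) \<le> fst (q v) \<and> snd (q u) \<le> snd (q v))"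
    proof (cases "u = r")
      case True
      have "(u, v) \<in> E\<^sup>*" using reach v True by simp
      moreover have "fst (q u) \<le> fst (q v) \<and> snd (q u) \<le> snd (q v)"
      proof (cases "v = r")
        case True then show ?thesis using \<open>u = r\<close> by simp
      next
        case False then show ?thesis using \<open>u = r\<close> qr pv[OF VV'[OF v False]] qV'[OF VV'[OF v False]] by simp
      qed
      ultimately show ?thesis by simp
    next
      case uF: False
      show ?thesis
      proof (cases "v = r")
        case True
        have "(u, v) \<notin> E\<^sup>*" using to_r uF True by blast
        moreover have "\<not> (fst (q u) \<le> fst (q v) \<and> snd (q u) \<le> snd (q v))"
          using True qr pv[OF VV'[OF u uF]] qV'[OF VV'[OF u uF]] by auto
        ultimately show ?thesis by simp
      next
        case False
        then show ?thesis using dom[OF VV'[OF u uF] VV'[OF v False]] qV'[OF VV'[OF u uF]] qV'[OF VV'[OF v False]]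
          unfolding le2_def by simp
      qed
    qed
  qed
  have zz: "(0::real \<times> real) = (0, 0)" by (simp add: zero_prod_def)
  have pp: "planar_straight_line V E q"
  proof (rule planarI)
    fix a b w assume ab: "(a, b) \<in> E" and w: "w \<in> V" and wa: "w \<noteq> a" and wb: "w \<noteq> b"
    show "q w \<notin> closed_segment (q a) (q b)"
    proof (cases "a = r \<and> b \<in> ch")
      case True
      then have wV: "w \<in> V'" using VV'[OF w] wa by blast
      show ?thesis
      proof
        assume "q w \<in> closed_segment (q a) (q b)"
        then have "p w \<in> closed_segment (0, 0) (p b)" using True qr qV'[OF wV] qV'[OF chV'] by simp
        then have "le2 (p w) (p b)" using seg0_le chV' True by blast
        then show False using child True wV wb by blast
      qed
    next
      case False
      then have abF: "(a, b) \<in> E \<inter> V' \<times> V'" using dich[OF ab] by blast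
      then have aV: "a \<in> V'" and bV: "b \<in> V'" by auto
      show ?thesis
      proof (cases "w = r")
        case True
        show ?thesis
        proof
          assume "q w \<in> closed_segment (q a) (q b)"
          then have z: "(0, 0) \<in> closed_segment (p a) (p b)" using True qr qV'[OF aV] qV'[OF bV] by simp
          have "1 \<le> fst ((0::real, 0::real)) + snd ((0::real, 0::real))"
            using seg_sum_ge[OF z] pv[OF aV] pv[OF bV] by blast
          then show False by simp
        qed
      next
        case False
        then have wV: "w \<in> V'" using VV'[OF w] by blast
        show ?thesis using planarD1[OF pl abF wV wa wb] qV'[OF wV] qV'[OF aV] qV'[OF bV] by simp
      qed
    qed
  next
    fix a b c d z assume ab: "(a, b) \<in> E" and cd: "(c, d) \<in> E" and ne: "(a, b) \<noteq> (c, d)"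
      and z1: "z \<in> closed_segment (q a) (q b)" and z2: "z \<in> closed_segment (q c) (q d)"
    have rootcase: "z \<in> q ` ({a, b} \<inter> {c, d})"
      if ab': "a = r" "b \<in> ch" and cd': "(c, d) \<in> E \<inter> V' \<times> V'"
        and z1: "z \<in> closed_segment (q a) (q b)" and z2: "z \<in> closed_segment (q c) (q d)"
      for a b c d
    proof -
      have cV: "c \<in> V'" and dV: "d \<in> V'" using cd' by auto
      have bV: "b \<in> V'" using chV' ab' by blast
      have "z \<in> closed_segment (0, 0) (p b)" using z1 ab' qr qV'[OF bV] by simp
      then have "le2 z (p b)" using seg0_le bV by blast
      moreover have z2': "z \<in> closed_segment (p c) (p d)" using z2 qV'[OF cV] qV'[OF dV] by simp
      ultimately have zb: "z = p b" using quad[OF ab'(2) cd'] by blast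
      have "b \<in> {c, d}"
      proof (rule ccontr)
        assume "b \<notin> {c, d}"
        then show False using planarD1[OF pl cd' bV] z2' zb by auto
      qed
      then have bin: "b \<in> {a, b} \<inter> {c, d}" by blast
      have "z = q b" using zb qV'[OF bV] by simp
      then show ?thesis using bin by blast
    qed
    show "z \<in> q ` ({a, b} \<inter> {c, d})"
    proof (cases "a = r \<and> b \<in> ch")
      case abR: True
      show ?thesis
      proof (cases "c = r \<and> d \<in> ch")
        case cdR: True
        have bd: "b \<noteq> d" using ne abR cdR by auto
        have bV: "b \<in> V'" and dV: "d \<in> V'" using chV' abR cdR by auto
        have z1': "z \<in> closed_segment 0 (p b)" using z1 abR qr qV'[OF bV] zz by simp
        have z2': "z \<in> closed_segment 0 (p d)" using z2 cdR qr qV'[OF dV] zz by simp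
        show ?thesis
        proof (cases "z = 0")
          case True then show ?thesis using abR cdR qr zz by auto
        next
          case False
          have "p b \<in> closed_segment 0 (p d) \<or> p d \<in> closed_segment 0 (p b)"
            using rays[OF z1' z2' False] .
          moreover have s0: "y \<in> closed_segment 0 (p e) \<Longrightarrow> e \<in> V' \<Longrightarrow> le2 y (p e)" for y e
            using seg0_le[of y e] zz by simp
          ultimately have "le2 (p b) (p d) \<or> le2 (p d) (p b)" using bV dV by blast
          then show ?thesis using child abR cdR bV dV bd by blast
        qed
      next
        case False
        then have cdF: "(c, d) \<in> E \<inter> V' \<times> V'" using dich[OF cd] by blast
        show ?thesis using rootcase[OF _ _ cdF z1 z2] abR by blast
      qed
    next
      case False
      then have abF: "(a, b) \<in> E \<inter> V' \<times> V'" using dich[OF ab] by blast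
      show ?thesis
      proof (cases "c = r \<and> d \<in> ch")
        case True
        have "z \<in> q ` ({c, d} \<inter> {a, b})" using rootcase[OF _ _ abF z2 z1] True by blast
        then show ?thesis by (simp add: Int_commute)
      next
        case False
        then have cdF: "(c, d) \<in> E \<inter> V' \<times> V'" using dich[OF cd] by blast
        have aV: "a \<in> V'" "b \<in> V'" "c \<in> V'" "d \<in> V'" using abF cdF by auto
        have "z \<in> p ` ({a, b} \<inter> {c, d})"
          using planarD2[OF pl abF cdF ne] z1 z2 qV' aV by simp
        moreover have "q ` ({a, b} \<inter> {c, d}) = p ` ({a, b} \<inter> {c, d})"
          by (rule image_cong) (use qV' aV in auto)
        ultimately show ?thesis by simp
      qed
    qed
  qed
  have cV: "card V' = card V - 1" unfolding V'_def using fin rV by simp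
  have c1: "1 \<le> card V" using fin rV card_0_eq by fastforce
  have ps: "q ` V \<subseteq> emb ` S (card V)"
  proof
    fix y assume "y \<in> q ` V"
    then obtain v where v: "v \<in> V" "y = q v" by blast
    show "y \<in> emb ` S (card V)"
    proof (cases "v = r")
      case True
      have "(0, 0) \<in> S (card V)" using c1 by (simp add: S_def)
      moreover have "emb (0, 0) = (0, 0)" by (simp add: emb_def)
      ultimately show ?thesis using True v qr by (metis image_eqI)
    next
      case False
      then have vV: "v \<in> V'" using VV' v by blast
      then obtain ij where ij: "ij \<in> G (card V')" "p v = emb ij" using pts by blast
      have "ij \<in> S (card V)" using ij(1) c1 unfolding cV by (cases ij) (auto simp: G_def S_def)
      moreover have "y = emb ij" using ij v qV'[OF vV] by simp
      ultimately show ?thesis by blast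
    qed
  qed
  show ?thesis unfolding TD_def q_def[symmetric] using dd pp qr ps by blast
qed


lemma forest:
  assumes IH: "\<forall>c\<in>ch. \<exists>q. TD (W c) (E \<inter> W c \<times> W c) c q"
  shows "R \<subseteq> ch \<Longrightarrow> R \<noteq> {} \<Longrightarrow> \<exists>p. FD R p"
proof (induction "card R" arbitrary: R rule: less_induct)
  case less
  have finR: "finite R" using less.prems(1) fin_ch finite_subset by blast
  obtain c0 where "c0 \<in> R" using less.prems(2) by blast
  then obtain c where c: "c \<in> R" and cmin: "\<And>c'. c' \<in> R \<Longrightarrow> card (W c) \<le> card (W c')"
    using ex_has_least_nat[of "\<lambda>c. c \<in> R" c0 "\<lambda>c. card (W c)"] by blast
  have cch: "c \<in> ch" using c less.prems(1) by blast
  obtain q where q: "TD (W c) (E \<inter> W c \<times> W c) c q" using IH cch by blast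
  show ?case
  proof (cases "R = {c}")
    case True
    then show ?thesis using base[OF cch q] by blast
  next
    case False
    define R' where "R' = R - {c}"
    have R'ne: "R' \<noteq> {}" using False c unfolding R'_def by blast
    have R'sub: "R' \<subseteq> ch" using less.prems(1) unfolding R'_def by blast
    have cR': "c \<notin> R'" unfolding R'_def by blast
    have "card R' < card R" unfolding R'_def by (rule card_Diff1_less[OF finR c])
    then obtain p1 where p1: "FD R' p1" using less.hyps R'ne R'sub by blast
    obtain c' where c': "c' \<in> R'" using R'ne by blast
    have "card (W c) \<le> card (W c')" using cmin c' unfolding R'_def by blast
    also have "\<dots> \<le> card (F R')"
      using card_mono[OF fin_F[OF R'sub]] c' unfolding F_def by blast
    finally have sz: "card (W c) \<le> card (F R') + 1" by simp
    have "insert c R' = R" unfolding R'_def using c by blast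
    then show ?thesis using merge[OF cch R'sub cR' sz p1 q] by metis
  qed
qed

end

lemma tree_drawing: "rooted_tree V E r \<Longrightarrow> \<exists>p. TD V E r p"
proof (induction "card V" arbitrary: V E r rule: less_induct)
  case less
  interpret t: rtree V E r by (rule rtree.intro) (rule less.prems)
  show ?case
  proof (cases "t.ch = {}")
    case True
    then have V1: "V = {r}" using t.cover t.rV by blast
    have E0: "E = {}" using t.sub t.noin V1 by blast
    have e: "(0::real, 0::real) \<in> emb ` S 1" by (rule image_eqI[of _ _ "(0,0)"]) (auto simp: emb_def S_def)
    have "TD V E r (\<lambda>_. (0, 0))"
      unfolding TD_def dominance_drawing_def planar_straight_line_def
      using V1 E0 e by auto
    then show ?thesis by blast
  next
    case False
    have IH: "\<forall>c\<in>t.ch. \<exists>q. TD (t.W c) (E \<inter> t.W c \<times> t.W c) c q"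
      using less.hyps t.card_W t.sub_tree by blast
    obtain p where "t.FD t.ch p" using t.forest[OF IH] False by blast
    then show ?thesis using t.attach by blast
  qed
qed



definition Srest :: "nat \<Rightarrow> (nat \<times> nat) set" where
  "Srest n = {(i, j). 1 \<le> i \<and> i + j < n \<and> n \<le> 2 * i + j}"

lemma S_split: "S n = ((\<lambda>j. (0, j)) ` {..<n}) \<union> Srest n"
  by (auto simp: S_def Srest_def)

lemma S_disj: "((\<lambda>j. (0::nat, j)) ` {..<n}) \<inter> Srest n = {}"
  by (auto simp: Srest_def)

lemma fin_Srest: "finite (Srest n)"
proof -
  have "Srest n \<subseteq> {..<n} \<times> {..<n}" by (auto simp: Srest_def)
  then show ?thesis using finite_subset by blast
qed

lemma fin_S: "finite (S n)" using S_split fin_Srest by simp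

lemma card_S: "card (S n) = n + card (Srest n)"
proof -
  have "card ((\<lambda>j. (0::nat, j)) ` {..<n}) = n" by (simp add: card_image inj_on_def)
  then show ?thesis unfolding S_split using card_Un_disjoint[OF _ fin_Srest S_disj] by simp
qed




lemma Srest_lower: "(n div 2) * (n div 2) \<le> card (Srest n)"
proof -
  define k where "k = n div 2"
  define f where "f = (\<lambda>(a::nat, b::nat). if b < a then (a, b + n - 2 * a) else (n - 1 - b, a))"
  have inj: "inj_on f ({..<k} \<times> {..<k})"
  proof (rule inj_onI)
    fix x y assume x: "x \<in> {..<k} \<times> {..<k}" and y: "y \<in> {..<k} \<times> {..<k}" and e: "f x = f y"
    obtain a b where ab: "x = (a, b)" by (cases x)
    obtain a' b' where ab': "y = (a', b')" by (cases y)
    have "a < k" "b < k" "a' < k" "b' < k" using x y ab ab' by auto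
    moreover have "f (a, b) = f (a', b')" using e ab ab' by simp
    ultimately have "a = a' \<and> b = b'" unfolding f_def k_def
      by (cases "b < a"; cases "b' < a'") auto
    then show "x = y" using ab ab' by simp
  qed
  have img: "f ` ({..<k} \<times> {..<k}) \<subseteq> Srest n"
  proof
    fix y assume "y \<in> f ` ({..<k} \<times> {..<k})"
    then obtain x where x: "x \<in> {..<k} \<times> {..<k}" "y = f x" by blast
    obtain a b where ab: "x = (a, b)" by (cases x)
    have "a < k" "b < k" using x ab by auto
    then show "y \<in> Srest n" using x ab unfolding f_def k_def Srest_def
      by (cases "b < a") auto
  qed
  have "card ({..<k} \<times> {..<k}) = k * k" by (simp add: card_cartesian_product)
  then show ?thesis using card_inj_on_le[OF inj img fin_Srest] unfolding k_def by simp
qed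

lemma Srest_upper: "card (Srest n) \<le> (n div 2 + 1) * (n div 2 + 1)"
proof -
  define k where "k = n div 2"
  define g where "g = (\<lambda>(i::nat, j::nat). if 2 * i \<le> n then (i, j + 2 * i - n) else (j, n - i))"
  have inj: "inj_on g (Srest n)"
  proof (rule inj_onI)
    fix x y assume x: "x \<in> Srest n" and y: "y \<in> Srest n" and e: "g x = g y"
    obtain a b where ab: "x = (a, b)" by (cases x)
    obtain a' b' where ab': "y = (a', b')" by (cases y)
    have "1 \<le> a \<and> a + b < n \<and> n \<le> 2 * a + b" "1 \<le> a' \<and> a' + b' < n \<and> n \<le> 2 * a' + b'"
      using x y ab ab' by (auto simp: Srest_def)
    moreover have "g (a, b) = g (a', b')" using e ab ab' by simp
    ultimately have "a = a' \<and> b = b'" unfolding g_def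
      by (cases "2 * a \<le> n"; cases "2 * a' \<le> n") auto
    then show "x = y" using ab ab' by simp
  qed
  have img: "g ` Srest n \<subseteq> {..k} \<times> {..k}"
  proof
    fix y assume "y \<in> g ` Srest n"
    then obtain x where x: "x \<in> Srest n" "y = g x" by blast
    obtain i j where ij: "x = (i, j)" by (cases x)
    have "1 \<le> i \<and> i + j < n \<and> n \<le> 2 * i + j" using x ij by (auto simp: Srest_def)
    then show "y \<in> {..k} \<times> {..k}" using x ij unfolding g_def k_def by (cases "2 * i \<le> n") auto
  qed
  have "card ({..k} \<times> {..k}) = (k + 1) * (k + 1)" by (simp add: card_cartesian_product)
  then show ?thesis using card_inj_on_le[OF inj img] unfolding k_def by simp
qed

lemma final_arith: fixes n k c :: nat assumes n1: "1 \<le> n" and k1: "n \<le> 2 * k + 1" "2 * k \<le> n"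
  and lo: "n + k * k \<le> c" and hi: "c \<le> n + (k + 1) * (k + 1)"
  shows "real n ^ 2 / 4 + 1 / 2 * real n \<le> real c \<and> real c \<le> real n ^ 2 / 4 + 3 * real n"
proof -
    have rk1: "real n \<le> 2 * real k + 1" "2 * real k \<le> real n" using k1 by linarith+
    have rlo: "real n + real k * real k \<le> real c" 
    proof -
      have "real (n + k * k) \<le> real c" using lo by (simp only: of_nat_le_iff)
      then show ?thesis by simp
    qed
    have rhi: "real c \<le> real n + (real k + 1) * (real k + 1)" 
    proof -
      have "real c \<le> real (n + (k + 1) * (k + 1))" using hi by (simp only: of_nat_le_iff)
      then show ?thesis by (simp add: algebra_simps)
    qed
    have n1r: "1 \<le> real n" using n1 by simp
    have sq1: "(real n - 1) * (real n - 1) \<le> (2 * real k) * (2 * real k)"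
      using rk1 n1r by (intro mult_mono) auto
    have sq2: "(2 * real k) * (2 * real k) \<le> real n * real n"
      using rk1 by (intro mult_mono) auto
    have e1: "(real n - 1) * (real n - 1) = real n * real n - 2 * real n + 1" by (simp add: algebra_simps)
    have e2: "(2 * real k) * (2 * real k) = 4 * (real k * real k)" by simp
    have e3: "(real k + 1) * (real k + 1) = real k * real k + 2 * real k + 1" by (simp add: algebra_simps)
    have "real n ^ 2 / 4 + 1 / 2 * real n \<le> real c"
      using rlo sq1 e1 e2 unfolding power2_eq_square by linarith
    moreover have "real c \<le> real n ^ 2 / 4 + 3 * real n"
      using rhi sq2 e2 e3 rk1 n1r unfolding power2_eq_square by linarith
    ultimately show ?thesis ..
qed
lemma emb_inj: "inj emb" unfolding emb_def inj_def by auto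

theorem theorem15:
  shows "\<exists>U :: nat \<Rightarrow> (real \<times> real) set.
    (\<forall>n. finite (U n)) \<and>
    (\<exists>c1 c2 :: real. c1 > 0 \<and> c2 > 0 \<and> (\<exists>N. \<forall>n\<ge>N.
        real n ^ 2 / 4 + c1 * real n \<le> real (card (U n)) \<and>
        real (card (U n)) \<le> real n ^ 2 / 4 + c2 * real n)) \<and>
    (\<forall>n (V :: nat set) E r. rooted_tree V E r \<and> card V = n \<longrightarrow>
        planar_dominance_drawing_on V E (U n))"
proof (intro exI[of _ "\<lambda>n. emb ` S n"] conjI allI impI)
  show "finite (emb ` S n)" for n using fin_S by simp
  have cardU: "card (emb ` S n) = card (S n)" for n using inj_on_subset[OF emb_inj subset_UNIV] by (rule card_image)
  show "\<exists>c1 c2 :: real. c1 > 0 \<and> c2 > 0 \<and> (\<exists>N. \<forall>n\<ge>N.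
        real n ^ 2 / 4 + c1 * real n \<le> real (card (emb ` S n)) \<and>
        real (card (emb ` S n)) \<le> real n ^ 2 / 4 + c2 * real n)"
  proof (rule exI[of _ "1/2"], rule exI[of _ 3], intro conjI exI[of _ "1::nat"] allI impI)
    fix n :: nat assume n1: "1 \<le> n"
    define k where "k = n div 2"
    have k1a: "n \<le> 2 * k + 1" unfolding k_def by presburger
    have k1b: "2 * k \<le> n" unfolding k_def by presburger
    note k1 = k1a k1b
    have lo: "n + k * k \<le> card (S n)" using Srest_lower card_S unfolding k_def by simp
    have hi: "card (S n) \<le> n + (k + 1) * (k + 1)" using Srest_upper card_S unfolding k_def by simp
    show "real n ^ 2 / 4 + 1 / 2 * real n \<le> real (card (emb ` S n))"
      using final_arith[OF n1 k1 lo hi] unfolding cardU by blast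
    show "real (card (emb ` S n)) \<le> real n ^ 2 / 4 + 3 * real n"
      using final_arith[OF n1 k1 lo hi] unfolding cardU by blast
  qed simp_all
next
  fix n and V :: "nat set" and E r
  assume h: "rooted_tree V E r \<and> card V = n"
  have rt: "rooted_tree V E r" using h by simp
  obtain p where p: "TD V E r p" using tree_drawing[OF rt] by (elim exE)
  then show "planar_dominance_drawing_on V E (emb ` S n)"
    unfolding planar_dominance_drawing_on_def TD_def using h by blast
qed

end
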